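(* Let $(a_k)_{k\ge1}$ be an unbounded, monotonically nondecreasing sequence of positive numbers, let $A=\{a_k:k\in\mathbb N\}\subset\mathbb{R}$, and let $\mathcal L'=(\mu_k)_{k\ge1}$ with $\mu_k=a_k^{-1}-a_{k+1}^{-1}$. Then $\mathcal L'$ is monotone (i.e. $\mu_{k+1}\le\mu_k$ for all $k\ge1$) if and only if for each $k\ge1$, $$\frac{a_{k+1}}{a_k}+\frac{a_{k+1}}{a_{k+2}}\ge2.$$ Furthermore, $\overline{\dim}_BA=\overline{\dim}_B\mathcal L'$.
   Context: For a nonempty bounded $B\subset\mathbb{R}^n$, with $B_\varepsilon$ its $\varepsilon$-neighbourhood and $|B_\varepsilon|$ its Lebesgue measure, $\overline{\dim}_BB=\inf\{s\ge0:\limsup_{\varepsilon\to0}|B_\varepsilon|/\varepsilon^{n-s}=0\}$. For a (possibly unbounded) set $A\subset\mathbb{R}^n$ with $0\notin\overline A$, $\overline{\dim}_BA:=\overline{\dim}_B\Phi(A)$ where $\Phi(x)=x/|x|^2$ (so here $\Phi(A)=\{a_k^{-1}:k\in\mathbb N\}$). For a sequence $\mathcal L'=(\mu_j)$ of positive numbers with $\sum_j\mu_j<\infty$, $\overline{\dim}_B\mathcal L':=\inf\{\gamma>0:\sum_{j=1}^\infty\mu_j^{\gamma}<\infty\}$. *)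

theory Defs
  imports "HOL-Analysis.Analysis"
begin

definition eps_nbhd :: "'a::euclidean_space set \<Rightarrow> real \<Rightarrow> 'a set" where
  "eps_nbhd B \<epsilon> = (\<Union>b\<in>B. ball b \<epsilon>)"

definition upper_box_dim :: "'a::euclidean_space set \<Rightarrow> real" where
  "upper_box_dim B = Inf {s. s \<ge> 0 \<and>
     Limsup (at_right 0)
       (\<lambda>\<epsilon>. ereal (measure lebesgue (eps_nbhd B \<epsilon>) / \<epsilon> powr (real DIM('a) - s))) = 0}"

definition inversion :: "'a::euclidean_space \<Rightarrow> 'a" where
  "inversion x = x /\<^sub>R (norm x)\<^sup>2"

text \<open>Upper box dimension of a possibly unbounded set A with 0 not in closure A.\<close>
definition upper_box_dim_unbdd :: "'a::euclidean_space set \<Rightarrow> real" where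
  "upper_box_dim_unbdd A = upper_box_dim (inversion ` A)"

definition upper_box_dim_seq :: "(nat \<Rightarrow> real) \<Rightarrow> real" where
  "upper_box_dim_seq \<mu> = Inf {\<gamma>. \<gamma> > 0 \<and> summable (\<lambda>j. \<mu> (Suc j) powr \<gamma>)}"

end

theory Submission
  imports Defs
begin


lemma nbhd_bounds:
  fixes b :: "nat \<Rightarrow> real" and \<epsilon> :: real
  assumes bpos: "\<And>n. b n > 0" and bdec: "\<And>n. b (Suc n) \<le> b n" and blim: "b \<longlonglongrightarrow> 0" and e: "\<epsilon> > 0"
  shows "(\<Sum>n. min \<epsilon> (b n - b (Suc n))) \<le> measure lebesgue (eps_nbhd (range b) \<epsilon>)"
    and "measure lebesgue (eps_nbhd (range b) \<epsilon>) \<le> 3*\<epsilon> + 2*(\<Sum>n. min \<epsilon> (b n - b (Suc n)))"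
proof -
  define m where "m = (\<lambda>n. b n - b (Suc n))"
  have anti: "\<And>n l. n \<le> l \<Longrightarrow> b l \<le> b n"
    by (rule lift_Suc_antimono_le[of b]) (use bdec in auto)
  have m0: "\<And>n. m n \<ge> 0" using bdec by (simp add: m_def)
  have msum: "summable m" unfolding m_def by (rule telescope_summable'[OF blim])
  have ssum: "summable (\<lambda>n. min \<epsilon> (m n))"
    by (rule summable_comparison_test[OF _ msum]) (use m0 e in auto)
  define U where "U = (\<Union>n. ball (b n) \<epsilon>)"
  have Ueq: "eps_nbhd (range b) \<epsilon> = U" unfolding eps_nbhd_def U_def by auto
  have Uborel: "U \<in> sets lborel" unfolding U_def by auto
  have Usub: "U \<subseteq> {-\<epsilon>..b 0 + \<epsilon>}"
  proof
    fix x assume "x \<in> U"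
    then obtain n where "dist (b n) x < \<epsilon>" unfolding U_def by auto
    moreover have "0 < b n" "b n \<le> b 0" using bpos anti[of 0 n] by auto
    ultimately show "x \<in> {-\<epsilon>..b 0 + \<epsilon>}" by (auto simp: dist_real_def)
  qed
  have Icc_fm: "\<And>l u::real. {l..u} \<in> fmeasurable lborel"
    by (simp add: fmeasurable_def emeasure_lborel_Icc_eq)
  have Ufm: "U \<in> fmeasurable lborel"
    by (rule fmeasurableI2[OF Icc_fm Usub Uborel])
  have Vleb: "measure lebesgue U = measure lborel U"
    using Uborel by simp
  have low: "(\<Sum>n. min \<epsilon> (m n)) \<le> measure lborel U"
  proof (rule suminf_le_const[OF ssum])
    fix K
    define W where "W = (\<lambda>n. {b n - min \<epsilon> (m n) <..< b n})"
    have disj: "disjoint_family_on W {..<K}"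
    proof (unfold disjoint_family_on_def, intro ballI impI)
      have key: "W i \<inter> W j = {}" if "i < j" for i j
      proof -
        have "b j \<le> b (Suc i)" using anti that by simp
        thus ?thesis unfolding W_def m_def by auto
      qed
      fix i j assume "i \<in> {..<K}" "j \<in> {..<K}" "i \<noteq> j"
      then show "W i \<inter> W j = {}"
        using key[of i j] key[of j i] by (cases "i < j") auto
    qed
    have "(\<Sum>n<K. min \<epsilon> (m n)) = (\<Sum>n<K. measure lborel (W n))"
      unfolding W_def using m0 e by (intro sum.cong) auto
    also have "\<dots> = measure lborel (\<Union>n\<in>{..<K}. W n)"
      by (rule measure_finite_Union[symmetric]) (use disj m0 e in \<open>auto simp: W_def emeasure_lborel_Ioo\<close>)
    also have "\<dots> \<le> measure lborel U"
    proof (rule measure_mono_fmeasurable[OF _ _ Ufm])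
      show "(\<Union>n\<in>{..<K}. W n) \<subseteq> U"
      proof
        fix x assume "x \<in> (\<Union>n\<in>{..<K}. W n)"
        then obtain n where "b n - min \<epsilon> (m n) < x" "x < b n" unfolding W_def by auto
        then have "dist (b n) x < \<epsilon>" by (auto simp: dist_real_def)
        then show "x \<in> U" unfolding U_def by auto
      qed
      show "(\<Union>n\<in>{..<K}. W n) \<in> sets lborel" unfolding W_def by auto
    qed
    finally show "(\<Sum>n<K. min \<epsilon> (m n)) \<le> measure lborel U" .
  qed
  then show "(\<Sum>n. min \<epsilon> (b n - b (Suc n))) \<le> measure lebesgue (eps_nbhd (range b) \<epsilon>)"
    by (simp add: Ueq Vleb m_def)
  define S where "S = (\<Sum>n. min \<epsilon> (m n))"
  have bound: "measure lborel U \<le> b K + 3*\<epsilon> + 2*S" for K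
  proof -
    define P where "P = (\<lambda>n. {b (Suc n)..b (Suc n) + min \<epsilon> (m n)} \<union> {b n - min \<epsilon> (m n)..b n})"
    define R where "R = {-\<epsilon>..b K + \<epsilon>} \<union> {b 0..b 0 + \<epsilon>} \<union> (\<Union>n\<in>{..<K}. P n)"
    have cover: "U \<subseteq> R"
    proof
      fix x assume "x \<in> U"
      then obtain j where xj: "dist (b j) x < \<epsilon>" unfolding U_def by auto
      show "x \<in> R"
      proof (cases "x < b K")
        case True
        then show ?thesis using xj bpos[of j] by (auto simp: R_def dist_real_def)
      next
        case xK: False
        show ?thesis
        proof (cases "x \<ge> b 0")
          case True
          then show ?thesis using xj anti[of 0 j] by (auto simp: R_def dist_real_def)
        next
          case x0: False
          have Kpos: "K \<noteq> 0" using xK x0 by (cases K) auto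
          define n where "n = (LEAST n. b (Suc n) \<le> x)"
          have ex: "b (Suc (K - 1)) \<le> x" using Kpos xK by simp
          have n1: "b (Suc n) \<le> x" unfolding n_def by (rule LeastI[where P="\<lambda>n. b (Suc n) \<le> x", OF ex])
          have nK: "n \<le> K - 1" unfolding n_def by (rule Least_le[where P="\<lambda>n. b (Suc n) \<le> x", OF ex])
          have n2: "x < b n"
          proof (cases n)
            case 0 then show ?thesis using x0 by simp
          next
            case (Suc p)
            have "\<not> b (Suc p) \<le> x" unfolding n_def
              by (rule not_less_Least) (use Suc in \<open>simp add: n_def\<close>)
            then show ?thesis using Suc by simp
          qed
          have "x \<in> P n"
          proof (cases "j \<le> n")
            case True
            then have "b n \<le> b j" using anti by simp
            then show ?thesis using xj n1 n2 by (auto simp: P_def m_def dist_real_def)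
          next
            case False
            then have "b j \<le> b (Suc n)" using anti by simp
            then show ?thesis using xj n1 n2 by (auto simp: P_def m_def dist_real_def)
          qed
          moreover have "n < K" using nK Kpos by simp
          ultimately show ?thesis by (auto simp: R_def)
        qed
      qed
    qed
    have Pm: "measure lborel (P n) \<le> 2 * min \<epsilon> (m n)" for n
    proof -
      have "measure lborel (P n) \<le> measure lborel {b (Suc n)..b (Suc n) + min \<epsilon> (m n)} + measure lborel {b n - min \<epsilon> (m n)..b n}"
        unfolding P_def by (rule measure_Un_le) auto
      also have "\<dots> = 2 * min \<epsilon> (m n)" using m0[of n] e by simp
      finally show ?thesis .
    qed
    have Rsets: "R \<in> sets lborel" unfolding R_def P_def by auto
    have Rsub: "R \<subseteq> {-\<epsilon>..b 0 + \<epsilon>}"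
    proof -
      have "b K \<le> b 0" using anti by simp
      moreover have "P n \<subseteq> {-\<epsilon>..b 0 + \<epsilon>}" for n
      proof -
        have "b (Suc n) > 0" "b n \<le> b 0" using bpos anti[of 0 n] by auto
        moreover have "b (Suc n) + m n = b n" by (simp add: m_def)
        ultimately show ?thesis using e m0[of n] unfolding P_def by auto
      qed
      ultimately show ?thesis unfolding R_def using e bpos[of 0] by auto
    qed
    have "measure lborel U \<le> measure lborel R"
      by (rule measure_mono_fmeasurable[OF cover Uborel fmeasurableI2[OF Icc_fm Rsub Rsets]])
    also have "\<dots> \<le> measure lborel ({-\<epsilon>..b K + \<epsilon>} \<union> {b 0..b 0 + \<epsilon>}) + measure lborel (\<Union>n\<in>{..<K}. P n)"
      unfolding R_def by (rule measure_Un_le) (auto simp: P_def)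
    also have "\<dots> \<le> (measure lborel {-\<epsilon>..b K + \<epsilon>} + measure lborel {b 0..b 0 + \<epsilon>}) + (\<Sum>n<K. measure lborel (P n))"
      by (intro add_mono measure_Un_le measure_UNION_le) (auto simp: P_def)
    also have "\<dots> \<le> (b K + 2*\<epsilon> + \<epsilon>) + (\<Sum>n<K. 2 * min \<epsilon> (m n))"
      using bpos[of K] e by (intro add_mono sum_mono Pm) auto
    also have "(\<Sum>n<K. 2 * min \<epsilon> (m n)) \<le> 2 * S"
      unfolding S_def sum_distrib_left[symmetric]
      by (intro mult_left_mono sum_le_suminf[OF ssum]) (use m0 e in auto)
    finally show ?thesis by simp
  qed
  have "(\<lambda>K. b K + 3*\<epsilon> + 2*S) \<longlonglongrightarrow> 0 + 3*\<epsilon> + 2*S"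
    by (intro tendsto_intros blim)
  then have "measure lborel U \<le> 0 + 3*\<epsilon> + 2*S"
    by (rule LIMSEQ_le_const) (use bound in auto)
  then show "measure lebesgue (eps_nbhd (range b) \<epsilon>) \<le> 3*\<epsilon> + 2*(\<Sum>n. min \<epsilon> (b n - b (Suc n)))"
    unfolding Ueq Vleb S_def m_def by simp
qed



lemma powr_step:
  fixes \<mu> \<gamma> P :: real
  assumes mu: "0 < \<mu>" and g: "0 < \<gamma>" "\<gamma> < 1" and P: "1 < 2 * P * \<mu>"
  shows "\<mu> powr \<gamma> \<le> 2 * P powr (1-\<gamma>) * \<mu>"
proof -
  have Ppos: "P > 0"
  proof (rule ccontr)
    assume "\<not> P > 0"
    then have "2*P*\<mu> \<le> 0" using mu by (simp add: mult_nonpos_nonneg)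
    then show False using P by linarith
  qed
  have "1/(2*\<mu>) \<le> P" using P mu by (simp add: field_simps)
  then have "(1/(2*\<mu>)) powr (1-\<gamma>) \<le> P powr (1-\<gamma>)"
    using g mu by (intro powr_mono2) auto
  moreover have "(1/(2*\<mu>)) powr (1-\<gamma>) = (2*\<mu>) powr (\<gamma> - 1)"
    using mu by (simp add: powr_divide powr_diff)
  ultimately have "2 * (2*\<mu>) powr (\<gamma> - 1) * \<mu> \<le> 2 * P powr (1-\<gamma>) * \<mu>"
    using mu by simp
  moreover have "2 * (2*\<mu>) powr (\<gamma> - 1) * \<mu> = (2*\<mu>) powr \<gamma>"
    using mu by (simp add: powr_diff field_simps)
  moreover have "(2*\<mu>) powr \<gamma> = 2 powr \<gamma> * \<mu> powr \<gamma>"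
    using mu by (simp add: powr_mult)
  moreover have "\<mu> powr \<gamma> \<le> 2 powr \<gamma> * \<mu> powr \<gamma>"
    using g by (simp add: mult_le_cancel_right1 ge_one_powr_ge_zero)
  ultimately show ?thesis by linarith
qed

lemma dyadic_bound:
  fixes \<mu> \<gamma> :: real and M :: nat
  assumes mu: "0 < \<mu>" "\<mu> \<le> (1/2)^M" and g: "0 < \<gamma>" "\<gamma> < 1"
  shows "\<exists>n\<ge>M. \<mu> powr \<gamma> \<le> 2 * (2 powr (1-\<gamma>))^n * min ((1/2)^n) \<mu>"
proof -
  obtain N0 where N0: "(1/2::real)^N0 < \<mu>" using real_arch_pow_inv[of \<mu> "1/2"] mu by auto
  define N where "N = (LEAST N. (1/2::real)^N < \<mu>)"
  have N1: "(1/2::real)^N < \<mu>" unfolding N_def by (rule LeastI[where P="\<lambda>N. (1/2::real)^N < \<mu>", OF N0])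
  have NM: "N > M"
  proof (rule ccontr)
    assume "\<not> M < N"
    then have "(1/2::real)^M \<le> (1/2)^N" by (simp add: power_decreasing)
    then show False using N1 mu by linarith
  qed
  define n where "n = N - 1"
  have Nn: "N = Suc n" using NM by (simp add: n_def)
  have n1: "\<mu> \<le> (1/2)^n"
  proof -
    have "n < N" using Nn by simp
    then have "\<not> (1/2::real)^n < \<mu>" unfolding N_def by (rule not_less_Least)
    then show ?thesis by simp
  qed
  have n2: "1 < 2 * 2^n * \<mu>" using N1 Nn by (simp add: field_simps)
  have "\<mu> powr \<gamma> \<le> 2 * (2^n) powr (1-\<gamma>) * \<mu>"
    by (rule powr_step[OF mu(1) g n2])
  also have "(2^n::real) powr (1-\<gamma>) = (2 powr (1-\<gamma>))^n"
    by (simp add: powr_realpow[symmetric] powr_powr mult.commute)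
  finally have "\<mu> powr \<gamma> \<le> 2 * (2 powr (1-\<gamma>))^n * \<mu>" .
  moreover have "min ((1/2)^n) \<mu> = \<mu>" using n1 by simp
  ultimately show ?thesis using NM Nn by (intro exI[of _ n]) auto
qed



lemma pow_powr: "0 < (x::real) \<Longrightarrow> (x^k) powr a = (x powr a)^k"
  by (simp add: powr_realpow[symmetric] powr_powr powr_power mult.commute)

lemma half_id: "(2 powr (1-\<gamma>))^k * ((1/2::real)^k) powr (1-s) = (2 powr (s-\<gamma>))^k"
proof -
  have "((1/2::real)^k) powr (1-s) = ((1/2) powr (1-s))^k" by (rule pow_powr) simp
  moreover have "2 powr (1-\<gamma>) * (1/2::real) powr (1-s) = 2 powr (s-\<gamma>)"
  proof -
    have "2 powr (1-\<gamma>) * (1/2::real) powr (1-s) = 2 powr (1-\<gamma>) / 2 powr (1-s)"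
      by (simp add: powr_divide)
    also have "\<dots> = 2 powr ((1-\<gamma>) - (1-s))" by (simp add: powr_diff)
    finally show ?thesis by simp
  qed
  ultimately show ?thesis by (simp add: power_mult_distrib[symmetric])
qed

lemma summable_from_growth:
  fixes m :: "nat \<Rightarrow> real" and s \<gamma> \<delta> :: real
  assumes m0: "\<And>j. m j \<ge> 0" and msum: "summable m"
    and s: "0 \<le> s" "s < \<gamma>" "\<gamma> < 1" and d: "\<delta> > 0"
    and Sb: "\<And>\<epsilon>. 0 < \<epsilon> \<Longrightarrow> \<epsilon> < \<delta> \<Longrightarrow> (\<Sum>j. min \<epsilon> (m j)) \<le> \<epsilon> powr (1 - s)"
  shows "summable (\<lambda>j. m j powr \<gamma>)"
proof -
  have g0: "0 < \<gamma>" using s by linarith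
  obtain M where M: "(1/2::real)^M < \<delta>" using real_arch_pow_inv[of \<delta> "1/2"] d by auto
  define q where "q = (2::real) powr (1-\<gamma>)"
  define r where "r = (2::real) powr (s-\<gamma>)"
  have q0: "q > 0" unfolding q_def by simp
  have r0: "0 < r" "r < 1" unfolding r_def using s by (auto intro: powr_less_one)
  have q2: "q/2 < 1" "0 < q/2"
  proof -
    have "q / 2 = 2 powr (-\<gamma>)" unfolding q_def by (simp add: powr_diff powr_minus_divide)
    then show "q/2 < 1" "0 < q/2" using g0 by (auto intro: powr_less_one)
  qed
  define g where "g = (\<lambda>j n. q^(n+M) * min ((1/2)^(n+M)) (m j))"
  have g0': "\<And>j n. 0 \<le> g j n" unfolding g_def using q0 m0 by auto
  have geo: "summable (\<lambda>n. (q/2)^(n+M))"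
    using summable_mult[OF summable_geometric[of "q/2"], of "(q/2)^M"] q2
    by (simp add: power_add mult.commute)
  have gsum: "summable (g j)" for j
  proof (rule summable_comparison_test[OF _ geo])
    show "\<exists>N. \<forall>n\<ge>N. norm (g j n) \<le> (q/2)^(n+M)"
    proof (intro exI allI impI)
      fix n
      have "g j n \<le> q^(n+M) * (1/2)^(n+M)" unfolding g_def
        using q0 by (intro mult_left_mono) auto
      also have "\<dots> = (q/2)^(n+M)" by (simp add: power_divide)
      finally show "norm (g j n) \<le> (q/2)^(n+M)" using g0'[of j n] by simp
    qed
  qed
  define f where "f = (\<lambda>j. if m j \<le> (1/2)^M then m j powr \<gamma> else 0)"
  have fb: "f j \<le> 2 * (\<Sum>n. g j n)" for j
  proof (cases "m j \<le> (1/2)^M \<and> m j \<noteq> 0")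
    case False
    then have "f j = 0" unfolding f_def by auto
    then show ?thesis using suminf_nonneg[OF gsum g0'] by simp
  next
    case True
    then have mp: "0 < m j" using m0[of j] by auto
    obtain n where n: "n \<ge> M" "m j powr \<gamma> \<le> 2 * (2 powr (1-\<gamma>))^n * min ((1/2)^n) (m j)"
      using dyadic_bound[OF mp _ g0 s(3)] True by blast
    have "g j (n - M) = (2 powr (1-\<gamma>))^n * min ((1/2)^n) (m j)"
      unfolding g_def q_def using n(1) by simp
    moreover have "g j (n - M) \<le> (\<Sum>n. g j n)"
      using sum_le_suminf[OF gsum[of j], of "{n - M}"] g0' by simp
    ultimately show ?thesis using n True unfolding f_def by simp
  qed
  define C where "C = 2 * (\<Sum>n. r^(n+M))"
  have rsum: "summable (\<lambda>n. r^(n+M))"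
    using summable_mult[OF summable_geometric[of r], of "r^M"] r0
    by (simp add: power_add mult.commute)
  have fpart: "(\<Sum>j<K. f j) \<le> C" for K
  proof -
    have "(\<Sum>j<K. f j) \<le> (\<Sum>j<K. 2 * (\<Sum>n. g j n))" by (intro sum_mono fb)
    also have "\<dots> = 2 * (\<Sum>n. \<Sum>j<K. g j n)"
      by (simp add: sum_distrib_left[symmetric] suminf_sum[OF gsum])
    also have "(\<Sum>n. \<Sum>j<K. g j n) \<le> (\<Sum>n. r^(n+M))"
    proof (rule suminf_le[OF _ summable_sum[OF gsum] rsum])
      fix n
      define t where "t = (1/2::real)^(n+M)"
      have t: "0 < t" "t < \<delta>"
      proof -
        show "0 < t" unfolding t_def by simp
        have "t \<le> (1/2)^M" unfolding t_def by (simp add: power_decreasing)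
        then show "t < \<delta>" using M by linarith
      qed
      have "(\<Sum>j<K. g j n) = q^(n+M) * (\<Sum>j<K. min t (m j))"
        unfolding g_def t_def by (simp add: sum_distrib_left)
      also have "(\<Sum>j<K. min t (m j)) \<le> (\<Sum>j. min t (m j))"
        by (rule sum_le_suminf) (auto intro: summable_comparison_test[OF _ msum] simp: m0 t(1) less_imp_le)
      also have "\<dots> \<le> t powr (1 - s)" by (rule Sb[OF t])
      also have "q^(n+M) * t powr (1 - s) = r^(n+M)"
        unfolding q_def r_def t_def by (rule half_id)
      finally show "(\<Sum>j<K. g j n) \<le> r^(n+M)" using q0 by (simp add: mult_left_mono)
    qed
    finally show ?thesis unfolding C_def by simp
  qed
  have f0: "0 \<le> f j" for j unfolding f_def by simp
  have fsum: "summable f"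
  proof (rule bounded_imp_summable[OF f0])
    fix n
    have "sum f {..n} = sum f {..<Suc n}" by (simp only: lessThan_Suc_atMost)
    then show "sum f {..n} \<le> C" using fpart[of "Suc n"] by simp
  qed
  have "m \<longlonglongrightarrow> 0" by (rule summable_LIMSEQ_zero[OF msum])
  then have "eventually (\<lambda>j. m j < (1/2)^M) sequentially"
    by (rule order_tendstoD) simp
  then have "eventually (\<lambda>j. f j = m j powr \<gamma>) sequentially"
    by eventually_elim (simp add: f_def)
  then show ?thesis using fsum summable_cong[of f "\<lambda>j. m j powr \<gamma>"] by simp
qed



lemma min_powr_bound:
  fixes \<mu> \<epsilon> \<gamma> :: real
  assumes "0 \<le> \<mu>" "0 < \<epsilon>" "0 < \<gamma>" "\<gamma> \<le> 1"
  shows "min \<epsilon> \<mu> \<le> \<mu> powr \<gamma> * \<epsilon> powr (1-\<gamma>)"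
proof (cases "\<mu> = 0")
  case True then show ?thesis by simp
next
  case False
  then have mp: "\<mu> > 0" using assms by simp
  show ?thesis
  proof (cases "\<mu> \<le> \<epsilon>")
    case True
    have "\<mu> = \<mu> powr \<gamma> * \<mu> powr (1-\<gamma>)" using mp by (simp add: powr_add[symmetric])
    also have "\<dots> \<le> \<mu> powr \<gamma> * \<epsilon> powr (1-\<gamma>)"
      using True assms mp by (intro mult_left_mono powr_mono2) auto
    finally show ?thesis using True by simp
  next
    case False
    have "\<epsilon> = \<epsilon> powr \<gamma> * \<epsilon> powr (1-\<gamma>)" using assms by (simp add: powr_add[symmetric])
    also have "\<dots> \<le> \<mu> powr \<gamma> * \<epsilon> powr (1-\<gamma>)"
      using False assms by (intro mult_right_mono powr_mono2) auto
    finally show ?thesis using False by simp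
  qed
qed

lemma dim_eq:
  fixes m :: "nat \<Rightarrow> real" and V :: "real \<Rightarrow> real"
  assumes m0: "\<And>j. m j \<ge> 0" and msum: "summable m"
    and Vlow: "\<And>\<epsilon>. \<epsilon> > 0 \<Longrightarrow> (\<Sum>j. min \<epsilon> (m j)) \<le> V \<epsilon>"
    and Vup: "\<And>\<epsilon>. \<epsilon> > 0 \<Longrightarrow> V \<epsilon> \<le> 3*\<epsilon> + 2*(\<Sum>j. min \<epsilon> (m j))"
  shows "Inf {s. s \<ge> 0 \<and> Limsup (at_right 0) (\<lambda>\<epsilon>. ereal (V \<epsilon> / \<epsilon> powr (1 - s))) = 0}
       = Inf {\<gamma>. \<gamma> > 0 \<and> summable (\<lambda>j. m j powr \<gamma>)}"
proof -
  define Bx where "Bx = {s. s \<ge> 0 \<and> Limsup (at_right 0) (\<lambda>\<epsilon>. ereal (V \<epsilon> / \<epsilon> powr (1 - s))) = 0}"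
  define G where "G = {\<gamma>. \<gamma> > 0 \<and> summable (\<lambda>j. m j powr \<gamma>)}"
  have minsum: "summable (\<lambda>j. min \<epsilon> (m j))" if "\<epsilon> > 0" for \<epsilon>
    by (rule summable_comparison_test[OF _ msum]) (use m0 that in auto)
  have mlim: "m \<longlonglongrightarrow> 0" by (rule summable_LIMSEQ_zero[OF msum])
  have up: "\<gamma>' \<in> G" if "\<gamma> \<in> G" "\<gamma> \<le> \<gamma>'" for \<gamma> \<gamma>'
  proof -
    have "eventually (\<lambda>j. m j < 1) sequentially"
      using order_tendstoD(2)[OF mlim] by simp
    then have "eventually (\<lambda>j. norm (m j powr \<gamma>') \<le> m j powr \<gamma>) sequentially"
    proof eventually_elim
      case (elim j)
      then show ?case using m0[of j] that(2) by (simp add: powr_mono')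
    qed
    then have "summable (\<lambda>j. m j powr \<gamma>')"
      by (rule summable_comparison_test_ev) (use that in \<open>simp add: G_def\<close>)
    then show ?thesis using that by (simp add: G_def)
  qed
  have one: "1 \<in> G" using msum m0 by (simp add: G_def)
  have B2: "s \<in> Bx" if g: "\<gamma> \<in> G" "\<gamma> \<le> 1" and s: "s > \<gamma>" for \<gamma> s
  proof -
    have g0: "\<gamma> > 0" using g by (simp add: G_def)
    have gs: "summable (\<lambda>j. m j powr \<gamma>)" using g by (simp add: G_def)
    define Mg where "Mg = (\<Sum>j. m j powr \<gamma>)"
    have Sb: "(\<Sum>j. min \<epsilon> (m j)) \<le> Mg * \<epsilon> powr (1-\<gamma>)" if e: "\<epsilon> > 0" for \<epsilon>
    proof -
      have "(\<Sum>j. min \<epsilon> (m j)) \<le> (\<Sum>j. m j powr \<gamma> * \<epsilon> powr (1-\<gamma>))"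
        by (rule suminf_le[OF _ minsum[OF e] summable_mult2[OF gs]])
           (use min_powr_bound m0 e g0 g(2) in auto)
      also have "\<dots> = Mg * \<epsilon> powr (1-\<gamma>)" unfolding Mg_def by (rule suminf_mult2[symmetric, OF gs])
      finally show ?thesis .
    qed
    define H where "H = (\<lambda>\<epsilon>::real. 3 * \<epsilon> powr s + 2 * Mg * \<epsilon> powr (s - \<gamma>))"
    have Hb: "V \<epsilon> / \<epsilon> powr (1 - s) \<le> H \<epsilon>" if e: "\<epsilon> > 0" for \<epsilon>
    proof -
      have "V \<epsilon> \<le> 3*\<epsilon> + 2*(Mg * \<epsilon> powr (1-\<gamma>))" using Vup[OF e] Sb[OF e] by linarith
      then have "V \<epsilon> / \<epsilon> powr (1 - s) \<le> (3*\<epsilon> + 2*(Mg * \<epsilon> powr (1-\<gamma>))) / \<epsilon> powr (1 - s)"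
        using e by (simp add: divide_right_mono)
      also have "\<dots> = H \<epsilon>"
      proof -
        have alg: "\<And>p q. p > 0 \<Longrightarrow> (3*\<epsilon> + 2*(Mg*q))/p = 3*(\<epsilon>/p) + 2*Mg*(q/p)"
          by (simp add: field_simps)
        have e1: "\<epsilon> / \<epsilon> powr (1-s) = \<epsilon> powr s" using powr_diff[of \<epsilon> 1 "1-s"] e by simp
        have e2: "\<epsilon> powr (1-\<gamma>) / \<epsilon> powr (1-s) = \<epsilon> powr (s-\<gamma>)"
          using powr_diff[of \<epsilon> "1-\<gamma>" "1-s"] by simp
        have pp: "\<epsilon> powr (1-s) > 0" using e by simp
        show ?thesis unfolding H_def alg[OF pp] e1 e2 by simp
      qed
      finally show ?thesis .
    qed
    have Hl: "(H \<longlongrightarrow> 0) (at_right 0)"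
    proof -
      have p: "((\<lambda>\<epsilon>::real. \<epsilon> powr a) \<longlongrightarrow> 0) (at_right 0)" if "a > 0" for a
        by (rule tendsto_zero_powrI[OF tendsto_ident_at tendsto_const _ that])
           (use eventually_at_right_less[of "0::real"] in \<open>auto elim: eventually_mono\<close>)
      have "((\<lambda>\<epsilon>. 3 * \<epsilon> powr s + 2 * Mg * \<epsilon> powr (s - \<gamma>)) \<longlongrightarrow> 3 * 0 + 2 * Mg * 0) (at_right 0)"
        by (intro tendsto_intros p) (use s g0 in auto)
      then show ?thesis by (simp add: H_def)
    qed
    have lowb: "eventually (\<lambda>\<epsilon>. 0 \<le> V \<epsilon> / \<epsilon> powr (1 - s)) (at_right 0)"
      using eventually_at_right_less[of "0::real"]
    proof eventually_elim
      case (elim \<epsilon>)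
      have "0 \<le> (\<Sum>j. min \<epsilon> (m j))" by (rule suminf_nonneg[OF minsum[OF elim]]) (use m0 elim in auto)
      then have "0 \<le> V \<epsilon>" using Vlow[OF elim] by linarith
      then show ?case by simp
    qed
    have upb: "eventually (\<lambda>\<epsilon>. V \<epsilon> / \<epsilon> powr (1 - s) \<le> H \<epsilon>) (at_right 0)"
      using eventually_at_right_less[of "0::real"] by eventually_elim (rule Hb)
    have "((\<lambda>\<epsilon>. V \<epsilon> / \<epsilon> powr (1 - s)) \<longlongrightarrow> 0) (at_right 0)"
      by (rule tendsto_sandwich[OF lowb upb tendsto_const Hl])
    then have "((\<lambda>\<epsilon>. ereal (V \<epsilon> / \<epsilon> powr (1 - s))) \<longlongrightarrow> ereal 0) (at_right 0)"
      by (rule tendsto_ereal)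
    then have "Limsup (at_right 0) (\<lambda>\<epsilon>. ereal (V \<epsilon> / \<epsilon> powr (1 - s))) = ereal 0"
      by (rule lim_imp_Limsup[OF trivial_limit_at_right_real])
    then have "Limsup (at_right 0) (\<lambda>\<epsilon>. ereal (V \<epsilon> / \<epsilon> powr (1 - s))) = 0"
      by (simp add: zero_ereal_def)
    then show ?thesis using s g0 by (simp add: Bx_def)
  qed
  have B3: "\<gamma> \<in> G" if sB: "s \<in> Bx" and sg: "s < \<gamma>" "\<gamma> < 1" for s \<gamma>
  proof -
    have s0: "s \<ge> 0" and L: "Limsup (at_right 0) (\<lambda>\<epsilon>. ereal (V \<epsilon> / \<epsilon> powr (1 - s))) = 0"
      using sB by (auto simp: Bx_def)
    have "eventually (\<lambda>\<epsilon>. ereal (V \<epsilon> / \<epsilon> powr (1 - s)) < 1) (at_right 0)"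
      by (rule Limsup_lessD) (simp add: L)
    then obtain \<delta> where d: "\<delta> > 0" and dd: "\<And>\<epsilon>. \<epsilon> > 0 \<Longrightarrow> \<epsilon> < \<delta> \<Longrightarrow> ereal (V \<epsilon> / \<epsilon> powr (1 - s)) < 1"
      unfolding eventually_at_right_field by auto
    have Sb: "(\<Sum>j. min \<epsilon> (m j)) \<le> \<epsilon> powr (1 - s)" if "0 < \<epsilon>" "\<epsilon> < \<delta>" for \<epsilon>
    proof -
      have "V \<epsilon> / \<epsilon> powr (1 - s) < 1" using dd[OF that] by simp
      then have "V \<epsilon> < \<epsilon> powr (1 - s)" using that by (simp add: divide_less_eq)
      then show ?thesis using Vlow[OF that(1)] by linarith
    qed
    have "summable (\<lambda>j. m j powr \<gamma>)"
      by (rule summable_from_growth[OF m0 msum s0 sg d Sb])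
    then show ?thesis using s0 sg by (simp add: G_def)
  qed
  have G0: "\<And>\<gamma>. \<gamma> \<in> G \<Longrightarrow> \<gamma> \<ge> 0" by (auto simp: G_def)
  have Bx0: "\<And>s. s \<in> Bx \<Longrightarrow> s \<ge> 0" by (auto simp: Bx_def)
  have Bne: "2 \<in> Bx" by (rule B2[OF one]) auto
  have bddB: "bdd_below Bx" unfolding bdd_below_def using Bx0 by blast
  have bddG: "bdd_below G" unfolding bdd_below_def using G0 by blast
  have "Inf Bx \<le> Inf G"
  proof (rule cInf_greatest)
    show "G \<noteq> {}" using one by auto
    fix \<gamma> assume g: "\<gamma> \<in> G"
    show "Inf Bx \<le> \<gamma>"
    proof (rule dense_ge)
      fix s assume s: "\<gamma> < s"
      show "Inf Bx \<le> s"
      proof (cases "\<gamma> \<le> 1")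
        case True
        show ?thesis by (rule cInf_lower[OF B2[OF g True s] bddB])
      next
        case False
        have "s \<in> Bx" using B2[OF one _ , of s] s False by auto
        then show ?thesis by (rule cInf_lower[OF _ bddB])
      qed
    qed
  qed
  moreover have "Inf G \<le> Inf Bx"
  proof (rule cInf_greatest)
    show "Bx \<noteq> {}" using Bne by auto
    fix s assume sB: "s \<in> Bx"
    show "Inf G \<le> s"
    proof (rule dense_ge)
      fix \<gamma> assume sg: "s < \<gamma>"
      show "Inf G \<le> \<gamma>"
      proof (cases "s < 1")
        case True
        define \<gamma>0 where "\<gamma>0 = (s + min \<gamma> 1) / 2"
        have "\<gamma>0 \<in> G" by (rule B3[OF sB]) (use True sg in \<open>auto simp: \<gamma>0_def\<close>)
        then have "\<gamma> \<in> G" by (rule up) (use True sg in \<open>auto simp: \<gamma>0_def\<close>)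
        then show ?thesis by (rule cInf_lower[OF _ bddG])
      next
        case False
        then have "\<gamma> \<in> G" using up[OF one, of \<gamma>] sg by auto
        then show ?thesis by (rule cInf_lower[OF _ bddG])
      qed
    qed
  qed
  ultimately show ?thesis unfolding Bx_def G_def by simp
qed



lemma ineq_equiv:
  fixes x y z :: real
  assumes "x > 0" "y > 0" "z > 0"
  shows "(1/y - 1/z \<le> 1/x - 1/y) \<longleftrightarrow> (2 \<le> y/x + y/z)"
proof -
  have "(1/y - 1/z \<le> 1/x - 1/y) \<longleftrightarrow> (2/y \<le> 1/x + 1/z)" by auto
  also have "\<dots> \<longleftrightarrow> 2 \<le> (1/x + 1/z) * y" using assms(2) by (rule pos_divide_le_eq)
  also have "(1/x + 1/z) * y = y/x + y/z" by (simp add: field_simps)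
  finally show ?thesis .
qed

lemma inversion_real: "(x::real) > 0 \<Longrightarrow> inversion x = 1 / x"
  by (simp add: inversion_def power2_eq_square divide_inverse)

theorem lemma2p12:
  fixes a :: "nat \<Rightarrow> real" and \<mu> :: "nat \<Rightarrow> real"
  assumes pos: "\<forall>k\<ge>1. a k > 0"
    and mono: "\<forall>k\<ge>1. a k \<le> a (Suc k)"
    and unbdd: "\<not> bdd_above (a ` {1..})"
    and mu_def: "\<forall>k\<ge>1. \<mu> k = 1 / a k - 1 / a (Suc k)"
  shows "((\<forall>k\<ge>1. \<mu> (Suc k) \<le> \<mu> k) \<longleftrightarrow>
           (\<forall>k\<ge>1. a (Suc k) / a k + a (Suc k) / a (Suc (Suc k)) \<ge> 2))
         \<and> upper_box_dim_unbdd (a ` {1..}) = upper_box_dim_seq \<mu>"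
proof
  show "(\<forall>k\<ge>1. \<mu> (Suc k) \<le> \<mu> k) \<longleftrightarrow>
           (\<forall>k\<ge>1. a (Suc k) / a k + a (Suc k) / a (Suc (Suc k)) \<ge> 2)"
  proof -
    have "(\<mu> (Suc k) \<le> \<mu> k) \<longleftrightarrow> (a (Suc k) / a k + a (Suc k) / a (Suc (Suc k)) \<ge> 2)" if k: "k \<ge> 1" for k
    proof -
      have "\<mu> (Suc k) = 1 / a (Suc k) - 1 / a (Suc (Suc k))" "\<mu> k = 1 / a k - 1 / a (Suc k)"
        using mu_def k by auto
      moreover have "a k > 0" "a (Suc k) > 0" "a (Suc (Suc k)) > 0" using pos k by auto
      ultimately show ?thesis using ineq_equiv by simp
    qed
    then show ?thesis by blast
  qed
next
  define b where "b = (\<lambda>j. 1 / a (Suc j))"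
  have apos: "\<And>j. a (Suc j) > 0" using pos by auto
  have bpos: "\<And>n. b n > 0" using apos by (simp add: b_def)
  have bdec: "\<And>n. b (Suc n) \<le> b n"
  proof -
    fix n
    have "a (Suc n) \<le> a (Suc (Suc n))" using mono by auto
    then show "b (Suc n) \<le> b n" unfolding b_def using apos[of n] apos[of "Suc n"]
      by (intro divide_left_mono) auto
  qed
  have amono: "\<And>n l. n \<le> l \<Longrightarrow> a (Suc n) \<le> a (Suc l)"
    by (rule lift_Suc_mono_le[of "\<lambda>j. a (Suc j)"]) (use mono in auto)
  have "filterlim (\<lambda>j. a (Suc j)) at_top sequentially"
    unfolding filterlim_at_top
  proof
    fix Z
    obtain k where k: "k \<ge> 1" "a k > Z" using unbdd unfolding bdd_above_def by (auto simp: not_le)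
    then obtain k' where k': "k = Suc k'" by (cases k) auto
    show "eventually (\<lambda>j. Z \<le> a (Suc j)) sequentially"
      unfolding eventually_sequentially
      using amono k k' by (intro exI[of _ k']) (auto intro: order.trans[OF less_imp_le])
  qed
  then have blim: "b \<longlonglongrightarrow> 0" unfolding b_def using tendsto_inverse_0_at_top by (simp add: divide_inverse)
  define m where "m = (\<lambda>j. b j - b (Suc j))"
  define V where "V = (\<lambda>\<epsilon>. measure lebesgue (eps_nbhd (range b) \<epsilon>))"
  have m0: "\<And>j. m j \<ge> 0" using bdec by (simp add: m_def)
  have msum: "summable m" unfolding m_def by (rule telescope_summable'[OF blim])
  have deq: "Inf {s. s \<ge> 0 \<and> Limsup (at_right 0) (\<lambda>\<epsilon>. ereal (V \<epsilon> / \<epsilon> powr (1 - s))) = 0}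
       = Inf {\<gamma>. \<gamma> > 0 \<and> summable (\<lambda>j. m j powr \<gamma>)}"
    by (rule dim_eq[OF m0 msum])
       (use nbhd_bounds[OF bpos bdec blim] in \<open>simp_all add: V_def m_def\<close>)
  have inv: "inversion ` (a ` {1..}) = range b"
  proof (rule set_eqI, rule iffI)
    fix x assume "x \<in> inversion ` (a ` {1..})"
    then obtain k where k: "k \<ge> 1" "x = inversion (a k)" by auto
    then obtain k' where k': "k = Suc k'" by (cases k) auto
    show "x \<in> range b" using k k' apos[of k'] by (simp add: inversion_real b_def)
  next
    fix x assume "x \<in> range b"
    then obtain j where "x = b j" by auto
    then have "x = inversion (a (Suc j))" using apos[of j] by (simp add: inversion_real b_def)
    then show "x \<in> inversion ` (a ` {1..})" by auto
  qed
  have mueq: "\<And>j. \<mu> (Suc j) = m j" using mu_def by (auto simp: m_def b_def)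
  show "upper_box_dim_unbdd (a ` {1..}) = upper_box_dim_seq \<mu>"
    unfolding upper_box_dim_unbdd_def upper_box_dim_seq_def upper_box_dim_def inv
    using deq by (simp add: V_def mueq)
qed


end
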